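(* Let $G$ be a $4$-regular graph on $n\ge 7$ vertices and let $G'$ be the labeled complete graph on $V(G)$ whose $+$ edges are exactly the edges of $G$. Let $H$ be the labeled complete graph obtained from $G'$ by adding, for every $3$-set $\{u,v,w\}\subseteq V(G')$, a new set $C_{uvw}$ of $7$ vertices, where all edges within $C_{uvw}$ are $+$, all edges from $C_{uvw}$ to $u,v,w$ are $+$, and all other edges incident to $C_{uvw}$ are $-$. Assign tolerance $t_u=7\left(\binom{n-1}{2}-1\right)+2$ to each $u\in V(G')$ and $t_v=3$ to each $v\in V(H)\setminus V(G')$. Then $H$ has a clustering in which every vertex $v$ has at most $t_v$ incident errors if and only if $V(G)$ can be partitioned into sets each of which induces a triangle in $G$.
   Context: A clustering is a partition of the vertex set. An error at a vertex $v$ is an incident edge that is a $+$ edge between different clusters or a $-$ edge within a cluster. *)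

theory Defs
  imports "HOL-Library.Disjoint_Sets"
begin

(* A labeled complete graph on vertex set W is given by a symmetric relation
   Plus: a pair of distinct vertices u v is a + edge iff Plus u v, otherwise a - edge. *)

definition same_cluster :: "'v set set \<Rightarrow> 'v \<Rightarrow> 'v \<Rightarrow> bool" where
  "same_cluster C u v \<longleftrightarrow> (\<exists>B\<in>C. u \<in> B \<and> v \<in> B)"

definition errors_at :: "'v set \<Rightarrow> ('v \<Rightarrow> 'v \<Rightarrow> bool) \<Rightarrow> 'v set set \<Rightarrow> 'v \<Rightarrow> nat" where
  "errors_at W Plus C v = card {u \<in> W. u \<noteq> v \<and>
      ((Plus u v \<and> \<not> same_cluster C u v) \<or> (\<not> Plus u v \<and> same_cluster C u v))}"

definition has_tolerant_clustering ::
  "'v set \<Rightarrow> ('v \<Rightarrow> 'v \<Rightarrow> bool) \<Rightarrow> ('v \<Rightarrow> nat) \<Rightarrow> bool" where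
  "has_tolerant_clustering W Plus t \<longleftrightarrow>
     (\<exists>C. partition_on W C \<and> (\<forall>v\<in>W. errors_at W Plus C v \<le> t v))"

definition H_vertices :: "'a set \<Rightarrow> ('a + ('a set \<times> nat)) set" where
  "H_vertices V = Inl ` V \<union> {Inr (T, i) | T i. T \<subseteq> V \<and> card T = 3 \<and> i < 7}"

fun H_plus :: "('a \<Rightarrow> 'a \<Rightarrow> bool) \<Rightarrow> ('a + ('a set \<times> nat)) \<Rightarrow> ('a + ('a set \<times> nat)) \<Rightarrow> bool" where
  "H_plus E (Inl u) (Inl v) = E u v"
| "H_plus E (Inr (T, i)) (Inr (T', j)) = (T = T')"
| "H_plus E (Inr (T, i)) (Inl u) = (u \<in> T)"
| "H_plus E (Inl u) (Inr (T, i)) = (u \<in> T)"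

fun H_tol :: "nat \<Rightarrow> ('a + ('a set \<times> nat)) \<Rightarrow> nat" where
  "H_tol n (Inl u) = 7 * ((n - 1 choose 2) - 1) + 2"
| "H_tol n (Inr x) = 3"

definition triangle_partition :: "'a set \<Rightarrow> ('a \<Rightarrow> 'a \<Rightarrow> bool) \<Rightarrow> bool" where
  "triangle_partition V E \<longleftrightarrow>
     (\<exists>P. partition_on V P \<and>
          (\<forall>B\<in>P. card B = 3 \<and> (\<forall>x\<in>B. \<forall>y\<in>B. x \<noteq> y \<longrightarrow> E x y)))"

end

theory Submission imports Defs begin

lemma same_cluster_part:
  assumes "partition_on W C" "K \<in> C" "a \<in> K"
  shows "same_cluster C b a \<longleftrightarrow> b \<in> K"
  using assms unfolding same_cluster_def partition_on_def disjoint_def by blast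

lemma fiber_partition:
  fixes f :: "'v \<Rightarrow> 'k" and W :: "'v set"
  defines "C \<equiv> (\<lambda>k. {x\<in>W. f x = k}) ` (f ` W)"
  shows "partition_on W C"
    and "a \<in> W \<Longrightarrow> b \<in> W \<Longrightarrow> same_cluster C a b \<longleftrightarrow> f a = f b"
  unfolding C_def partition_on_def disjoint_def same_cluster_def by auto

locale cg =
  fixes V :: "'a set" and E :: "'a \<Rightarrow> 'a \<Rightarrow> bool"
  assumes fin: "finite V"
    and Ein: "\<And>u v. E u v \<Longrightarrow> u \<in> V \<and> v \<in> V"
    and Esym: "\<And>u v. E u v \<Longrightarrow> E v u"
    and irr: "\<And>u. \<not> E u u"
    and deg: "\<And>v. v \<in> V \<Longrightarrow> card {u \<in> V. E v u} = 4"
    and big: "card V \<ge> 7"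
begin

abbreviation W where "W \<equiv> H_vertices V"
definition Trip where "Trip = {T. T \<subseteq> V \<and> card T = 3}"
definition TU where "TU u = {T. T \<subseteq> V \<and> card T = 3 \<and> u \<in> T}"
definition Gad :: "'a set \<Rightarrow> ('a + 'a set \<times> nat) set" where
  "Gad T = (\<lambda>i. Inr (T,i)) ` {..<7}"
definition N where "N u = {w\<in>V. E u w}"
definition cc where "cc = (card V - 1) choose 2"
definition GP :: "'a \<Rightarrow> ('a + 'a set \<times> nat) set" where
  "GP u = (\<lambda>(T,i). Inr (T,i)) ` (TU u \<times> {..<7})"
definition Pos where "Pos u = GP u \<union> Inl ` N u"

lemma memW_Inl[simp]: "Inl u \<in> W \<longleftrightarrow> u \<in> V" by (auto simp: H_vertices_def)
lemma memW_Inr[simp]: "Inr (T,i) \<in> W \<longleftrightarrow> T \<subseteq> V \<and> card T = 3 \<and> i < 7"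
  by (auto simp: H_vertices_def)

lemma W_eq: "W = Inl ` V \<union> (\<lambda>(T,i). Inr (T,i)) ` (Trip \<times> {..<7})"
  by (auto simp: H_vertices_def Trip_def)

lemma finW: "finite W"
proof -
  have "finite Trip" using fin unfolding Trip_def by (rule rev_finite_subset[OF finite_Pow_iff[THEN iffD2]]) auto
  then show ?thesis unfolding W_eq using fin by auto
qed

lemma card_Gad: "card (Gad T) = 7" by (simp add: Gad_def card_image inj_on_def)

lemma card_N: "u \<in> V \<Longrightarrow> card (N u) = 4" using deg by (simp add: N_def)
lemma finN: "finite (N u)" using fin by (simp add: N_def)

lemma card_TU: assumes "u \<in> V" shows "card (TU u) = cc"
proof -
  have eq: "TU u = insert u ` {A. A \<subseteq> V - {u} \<and> card A = 2}"
  proof (rule set_eqI, rule iffI)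
    fix T assume "T \<in> TU u"
    hence T: "T \<subseteq> V" "card T = 3" "u \<in> T" by (auto simp: TU_def)
    have "finite T" using T fin finite_subset by blast
    have "T = insert u (T - {u})" using T by auto
    moreover have "card (T - {u}) = 2" using T \<open>finite T\<close> by simp
    ultimately show "T \<in> insert u ` {A. A \<subseteq> V - {u} \<and> card A = 2}" using T by blast
  next
    fix T assume "T \<in> insert u ` {A. A \<subseteq> V - {u} \<and> card A = 2}"
    then obtain A where A: "A \<subseteq> V - {u}" "card A = 2" "T = insert u A" by blast
    have "finite A" using A fin finite_subset by blast
    moreover have "u \<notin> A" using A by blast
    ultimately show "T \<in> TU u" using A assms by (auto simp: TU_def)
  qed
  have inj: "inj_on (insert u) {A. A \<subseteq> V - {u} \<and> card A = 2}"
    unfolding inj_on_def by (metis Diff_insert_absorb mem_Collect_eq subset_Diff_insert)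
  have "card (TU u) = card {A. A \<subseteq> V - {u} \<and> card A = 2}"
    unfolding eq by (rule card_image[OF inj])
  also have "\<dots> = card (V - {u}) choose 2" using fin by (simp add: n_subsets)
  finally show ?thesis using assms fin by (simp add: cc_def)
qed

lemma cc_pos: "cc \<ge> 1"
  using big by (simp add: cc_def Suc_le_eq)

lemma card_GP: "u \<in> V \<Longrightarrow> card (GP u) = 7 * cc"
  unfolding GP_def
  by (subst card_image) (auto simp: inj_on_def card_cartesian_product card_TU)

lemma finTU: "finite (TU u)"
  using fin unfolding TU_def by (rule rev_finite_subset[OF finite_Pow_iff[THEN iffD2]]) auto

lemma finGP: "finite (GP u)" using finTU by (simp add: GP_def)

lemma card_Pos: assumes u: "u \<in> V" shows "card (Pos u) = 7 * cc + 4"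
proof -
  have d: "GP u \<inter> Inl ` N u = {}" by (auto simp: GP_def)
  show ?thesis using card_Un_disjoint[OF finGP _ d] u finN card_GP card_N
    by (simp add: card_image Pos_def)
qed

end

locale cgC = cg +
  fixes C :: "('a + 'a set \<times> nat) set set"
  assumes part: "partition_on (H_vertices V) C"
    and tol: "\<forall>v\<in>H_vertices V. errors_at (H_vertices V) (H_plus E) C v \<le> H_tol (card V) v"
begin

definition errset where
  "errset v = {u \<in> W. u \<noteq> v \<and> ((H_plus E u v \<and> \<not> same_cluster C u v) \<or> (\<not> H_plus E u v \<and> same_cluster C u v))}"

lemma err_le: "v \<in> W \<Longrightarrow> card (errset v) \<le> H_tol (card V) v"
  using tol unfolding errors_at_def errset_def by blast

lemma finerr: "finite (errset v)" using finW unfolding errset_def by auto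

lemma KW: "K \<in> C \<Longrightarrow> K \<subseteq> W" using part unfolding partition_on_def by blast

lemma sc: "K \<in> C \<Longrightarrow> a \<in> K \<Longrightarrow> same_cluster C b a \<longleftrightarrow> b \<in> K"
  using same_cluster_part[OF part] by blast

lemma gad:
  assumes K: "K \<in> C" and x: "Inr (T,i) \<in> K"
  shows "card (Gad T - K) + card (K - Gad T - Inl ` T) \<le> 3"
proof -
  have xW: "Inr (T,i) \<in> W" using KW[OF K] x by blast
  have sub: "(Gad T - K) \<union> (K - Gad T - Inl ` T) \<subseteq> errset (Inr (T,i))"
  proof
    fix y assume y: "y \<in> (Gad T - K) \<union> (K - Gad T - Inl ` T)"
    show "y \<in> errset (Inr (T,i))"
    proof (cases "y \<in> Gad T - K")
      case True
      then obtain j where j: "y = Inr (T,j)" "j < 7" "y \<notin> K" by (auto simp: Gad_def)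
      then show ?thesis using xW x sc[OF K x, of y] by (auto simp: errset_def)
    next
      case False
      hence yK: "y \<in> K" "y \<notin> Gad T" "y \<notin> Inl ` T" using y by auto
      have yW: "y \<in> W" using yK KW[OF K] by blast
      have np: "\<not> H_plus E y (Inr (T,i))"
      proof (cases y)
        case (Inl w) then show ?thesis using yK by auto
      next
        case (Inr z) then obtain T' j where z: "y = Inr (T',j)" by (cases z) auto
        then have "j < 7" using yW by simp
        then show ?thesis using yK z by (auto simp: Gad_def)
      qed
      have "y \<noteq> Inr (T,i)" using yK xW by (auto simp: Gad_def)
      then show ?thesis using yW np sc[OF K x, of y] yK by (auto simp: errset_def)
    qed
  qed
  have eq: "card ((Gad T - K) \<union> (K - Gad T - Inl ` T)) = card (Gad T - K) + card (K - Gad T - Inl ` T)"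
    using finite_subset[OF KW[OF K] finW] by (intro card_Un_disjoint) (auto simp: Gad_def)
  show ?thesis using card_mono[OF finerr sub] err_le[OF xW] eq by simp
qed

lemma gad4:
  assumes K: "K \<in> C" and x: "Inr (T,i) \<in> K"
  shows "4 \<le> card (Gad T \<inter> K)"
proof -
  have fG: "finite (Gad T)" by (simp add: Gad_def)
  have "card (Gad T) = card (Gad T - K) + card (Gad T \<inter> K)"
    using card_Int_Diff[OF fG, of K] by simp
  then show ?thesis using gad[OF K x] card_Gad by simp
qed

lemma same:
  assumes K: "K \<in> C" and x1: "Inr (T1,i) \<in> K" and x2: "Inr (T2,j) \<in> K"
  shows "T1 = T2"
proof (rule ccontr)
  assume ne: "T1 \<noteq> T2"
  have "Gad T2 \<inter> K \<subseteq> K - Gad T1 - Inl ` T1" using ne by (auto simp: Gad_def)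
  hence "card (Gad T2 \<inter> K) \<le> card (K - Gad T1 - Inl ` T1)"
    using finite_subset[OF KW[OF K] finW] by (intro card_mono) auto
  then show False using gad[OF K x1] gad4[OF K x2] by simp
qed

lemma stepA:
  assumes K: "K \<in> C" and x: "Inl u \<in> K"
  shows "\<exists>T i. Inr (T,i) \<in> K \<and> u \<in> T \<and> 2 \<le> card (N u \<inter> {w. Inl w \<in> K})"
proof -
  have xW: "Inl u \<in> W" using KW[OF K] x by blast
  hence u: "u \<in> V" by simp
  have sub: "Pos u - K \<subseteq> errset (Inl u)"
  proof
    fix y assume y: "y \<in> Pos u - K"
    have yW: "y \<in> W" using y u by (auto simp: Pos_def GP_def N_def TU_def)
    have pl: "H_plus E y (Inl u)" using y Esym by (auto simp: Pos_def GP_def N_def TU_def)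
    show "y \<in> errset (Inl u)" using yW pl y x sc[OF K x, of y] by (auto simp: errset_def)
  qed
  have fP: "finite (Pos u)" by (simp add: Pos_def finGP finN)
  have "card (Pos u - K) \<le> 7 * (cc - 1) + 2"
    using card_mono[OF finerr sub] err_le[OF xW] by (simp add: cc_def)
  moreover have "card (Pos u) = card (Pos u - K) + card (Pos u \<inter> K)"
    using card_Int_Diff[OF fP, of K] by simp
  ultimately have P9: "9 \<le> card (Pos u \<inter> K)" using card_Pos[OF u] cc_pos by simp
  have "GP u \<inter> K \<noteq> {}"
  proof
    assume e: "GP u \<inter> K = {}"
    have "Pos u \<inter> K \<subseteq> Inl ` N u" using e by (auto simp: Pos_def)
    hence "card (Pos u \<inter> K) \<le> card (Inl ` N u :: ('a + 'a set \<times> nat) set)" by (intro card_mono) (simp_all add: finN)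
    also have "\<dots> \<le> 4" using card_N[OF u] card_image_le[OF finN, of Inl u] by simp
    finally show False using P9 by simp
  qed
  then obtain T i where Ti: "Inr (T,i) \<in> K" "T \<in> TU u" by (auto simp: GP_def)
  have "Pos u \<inter> K \<subseteq> Gad T \<union> Inl ` (N u \<inter> {w. Inl w \<in> K})"
  proof
    fix y assume y: "y \<in> Pos u \<inter> K"
    show "y \<in> Gad T \<union> Inl ` (N u \<inter> {w. Inl w \<in> K})"
    proof (cases "y \<in> GP u")
      case True
      then obtain T' j where "y = Inr (T',j)" "j < 7" by (auto simp: GP_def)
      moreover have "T' = T" using same[OF K _ Ti(1)] y calculation by auto
      ultimately show ?thesis by (auto simp: Gad_def)
    next
      case False then show ?thesis using y by (auto simp: Pos_def)
    qed
  qed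
  hence "card (Pos u \<inter> K) \<le> card (Gad T \<union> Inl ` (N u \<inter> {w. Inl w \<in> K}))"
    by (intro card_mono) (simp_all add: finN Gad_def)
  also have "\<dots> \<le> card (Gad T) + card (Inl ` (N u \<inter> {w. Inl w \<in> K}) :: ('a + 'a set \<times> nat) set)" by (rule card_Un_le)
  also have "\<dots> = 7 + card (N u \<inter> {w. Inl w \<in> K})" by (simp add: card_Gad card_image)
  finally have "2 \<le> card (N u \<inter> {w. Inl w \<in> K})" using P9 by simp
  then show ?thesis using Ti by (auto simp: TU_def)
qed


lemma block:
  assumes K: "K \<in> C" and x: "Inl u \<in> K"
  shows "{w. Inl w \<in> K} \<in> Trip \<and> (\<forall>a\<in>{w. Inl w \<in> K}. \<forall>b\<in>{w. Inl w \<in> K}. a \<noteq> b \<longrightarrow> E a b)"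
proof -
  let ?K = "{w. Inl w \<in> K}"
  obtain T i where Ti: "Inr (T,i) \<in> K" "u \<in> T" using stepA[OF K x] by blast
  have "Inr (T,i) \<in> W" using KW[OF K] Ti(1) by blast
  hence TV: "T \<subseteq> V" "card T = 3" by auto
  have fT: "finite T" using TV fin finite_subset by blast
  have KT: "?K \<subseteq> T"
  proof
    fix w assume "w \<in> ?K"
    then obtain T' j where "Inr (T',j) \<in> K" "w \<in> T'" using stepA[OF K] by blast
    then show "w \<in> T" using same[OF K _ Ti(1)] by blast
  qed
  have eq: "N w \<inter> ?K = T - {w}" if w: "w \<in> ?K" for w
  proof -
    obtain T' j where "2 \<le> card (N w \<inter> ?K)" using stepA[OF K] w by blast
    moreover have sub: "N w \<inter> ?K \<subseteq> T - {w}" using KT irr by (auto simp: N_def)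
    moreover have "card (T - {w}) = 2" using KT w TV fT by auto
    ultimately show ?thesis using card_seteq[OF _ sub] fT by simp
  qed
  have "T \<subseteq> ?K" using eq[of u] x Ti(2) by blast
  hence KeqT: "?K = T" using KT by blast
  show ?thesis
  proof
    show "?K \<in> Trip" using KeqT TV by (simp add: Trip_def)
    show "\<forall>a\<in>?K. \<forall>b\<in>?K. a \<noteq> b \<longrightarrow> E a b"
    proof (intro ballI impI)
      fix a b assume a: "a \<in> ?K" and b: "b \<in> ?K" and ab: "a \<noteq> b"
      have "b \<in> T - {a}" using b ab KeqT by blast
      then show "E a b" using eq[OF a] by (auto simp: N_def)
    qed
  qed
qed

lemma forward: "triangle_partition V E"
proof -
  define P where "P = (\<lambda>K. {w. Inl w \<in> K}) ` C - {{}}"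
  have "partition_on V P"
    unfolding partition_on_def disjoint_def
  proof (intro conjI ballI impI)
    show "\<Union>P = V"
    proof
      show "\<Union>P \<subseteq> V" using KW by (force simp: P_def)
      show "V \<subseteq> \<Union>P"
      proof
        fix u assume "u \<in> V"
        hence "Inl u \<in> W" by simp
        then obtain K where "K \<in> C" "Inl u \<in> K" using part unfolding partition_on_def by blast
        then show "u \<in> \<Union>P" unfolding P_def by blast
      qed
    qed
    show "{} \<notin> P" by (simp add: P_def)
    fix A B assume A: "A \<in> P" and B: "B \<in> P" and AB: "A \<noteq> B"
    then obtain KA KB where "KA \<in> C" "KB \<in> C" "A = {w. Inl w \<in> KA}" "B = {w. Inl w \<in> KB}"
      by (auto simp: P_def)
    moreover have "KA = KB \<or> KA \<inter> KB = {}" using part calculation(1,2)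
      unfolding partition_on_def disjoint_def by blast
    ultimately show "A \<inter> B = {}" using AB by blast
  qed
  moreover have "\<forall>B\<in>P. card B = 3 \<and> (\<forall>x\<in>B. \<forall>y\<in>B. x \<noteq> y \<longrightarrow> E x y)"
  proof
    fix B assume "B \<in> P"
    then obtain K u where K: "K \<in> C" "B = {w. Inl w \<in> K}" "u \<in> B" by (auto simp: P_def)
    then show "card B = 3 \<and> (\<forall>x\<in>B. \<forall>y\<in>B. x \<noteq> y \<longrightarrow> E x y)"
      using block[OF K(1), of u] by (simp add: Trip_def)
  qed
  ultimately show ?thesis unfolding triangle_partition_def by blast
qed

end

context cg begin

lemma backward:
  assumes "triangle_partition V E"
  shows "has_tolerant_clustering W (H_plus E) (H_tol (card V))"
proof -
  obtain P where P: "partition_on V P" and tri: "\<And>B. B \<in> P \<Longrightarrow> card B = 3 \<and> (\<forall>x\<in>B. \<forall>y\<in>B. x \<noteq> y \<longrightarrow> E x y)"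
    using assms unfolding triangle_partition_def by blast
  have PV: "B \<subseteq> V" if "B \<in> P" for B using P that unfolding partition_on_def by blast
  define blk where "blk u = (SOME B. B \<in> P \<and> u \<in> B)" for u
  have blk: "blk u \<in> P \<and> u \<in> blk u" if "u \<in> V" for u
  proof -
    have "\<exists>B. B \<in> P \<and> u \<in> B" using P that unfolding partition_on_def by blast
    then show ?thesis unfolding blk_def by (rule someI_ex)
  qed
  have uniq: "blk u = B" if "B \<in> P" "u \<in> B" for u B
  proof -
    have "u \<in> V" using PV that by blast
    then show ?thesis using blk[of u] P that unfolding partition_on_def disjoint_def by blast
  qed
  define key :: "('a + 'a set \<times> nat) \<Rightarrow> 'a set" where "key = case_sum blk fst"
  define C where "C = (\<lambda>k. {x\<in>W. key x = k}) ` (key ` W)"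
  have part: "partition_on W C" unfolding C_def by (rule fiber_partition(1))
  have sc: "a \<in> W \<Longrightarrow> b \<in> W \<Longrightarrow> same_cluster C a b \<longleftrightarrow> key a = key b" for a b
    unfolding C_def by (rule fiber_partition(2))
  have "\<forall>v\<in>W. errors_at W (H_plus E) C v \<le> H_tol (card V) v"
  proof
    fix v assume vW: "v \<in> W"
    let ?S = "{y \<in> W. y \<noteq> v \<and> ((H_plus E y v \<and> \<not> same_cluster C y v) \<or> (\<not> H_plus E y v \<and> same_cluster C y v))}"
    have fS: "finite ?S" using finW by simp
    show "errors_at W (H_plus E) C v \<le> H_tol (card V) v"
      unfolding errors_at_def
    proof (cases v)
      case (Inl u)
      hence u: "u \<in> V" using vW by simp
      let ?B = "blk u"
      have B: "?B \<in> P" "u \<in> ?B" using blk[OF u] by auto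
      have BTU: "?B \<in> TU u" using B PV tri[OF B(1)] by (auto simp: TU_def)
      let ?S1 = "(\<lambda>(T,i). Inr (T,i)) ` ((TU u - {?B}) \<times> {..<7}) :: ('a + 'a set \<times> nat) set"
      let ?S2 = "Inl ` (N u - ?B) :: ('a + 'a set \<times> nat) set"
      have sub: "?S \<subseteq> ?S1 \<union> ?S2"
      proof
        fix y assume y: "y \<in> ?S"
        show "y \<in> ?S1 \<union> ?S2"
        proof (cases y)
          case (Inl w)
          have w: "w \<in> V" using y Inl by simp
          have kw: "key y = ?B \<longleftrightarrow> w \<in> ?B" using uniq[OF B(1), of w] blk[OF w] Inl key_def by auto
          have "E w u \<and> w \<notin> ?B"
          proof -
            have c: "(E w u \<and> key y \<noteq> key v) \<or> (\<not> E w u \<and> key y = key v)" "w \<noteq> u"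
              using y Inl \<open>v = Inl u\<close> sc[of y v] vW by auto
            have kv: "key v = ?B" using \<open>v = Inl u\<close> key_def by simp
            show ?thesis using c kw kv tri[OF B(1)] B(2) by (metis)
          qed
          then show ?thesis using Inl w Esym by (auto simp: N_def)
        next
          case (Inr z)
          then obtain T i where yz: "y = Inr (T,i)" by (cases z) auto
          have Ti: "T \<subseteq> V" "card T = 3" "i < 7" using y yz by auto
          have c: "(u \<in> T \<and> T \<noteq> ?B) \<or> (u \<notin> T \<and> T = ?B)"
            using y yz \<open>v = Inl u\<close> sc[of y v] vW by (auto simp: key_def)
          hence "u \<in> T \<and> T \<noteq> ?B" using B(2) by blast
          then show ?thesis using Ti yz by (auto simp: TU_def)
        qed
      qed
      have c1: "card ?S1 = 7 * (cc - 1)"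
        using BTU finTU card_TU[OF u]
        by (subst card_image) (auto simp: inj_on_def card_cartesian_product)
      have nb: "?B - {u} \<subseteq> N u" using tri[OF B(1)] B PV[OF B(1)] by (auto simp: N_def)
      have fB: "finite ?B" using PV[OF B(1)] fin finite_subset by blast
      have "N u - ?B = N u - (?B - {u})" using irr by (auto simp: N_def)
      hence "card (N u - ?B) = 4 - 2"
        using card_Diff_subset[OF _ nb] fB card_N[OF u] tri[OF B(1)] B(2) by simp
      hence c2: "card ?S2 = 2" by (simp add: card_image)
      have "card ?S \<le> card (?S1 \<union> ?S2)" using sub by (intro card_mono) (simp_all add: finTU finN)
      also have "\<dots> \<le> card ?S1 + card ?S2" by (rule card_Un_le)
      finally show "card ?S \<le> H_tol (card V) v" using c1 c2 \<open>v = Inl u\<close> by (simp add: cc_def)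
    next
      case (Inr z)
      then obtain T i where vz: "v = Inr (T,i)" by (cases z) auto
      have Ti: "T \<subseteq> V" "card T = 3" using vW vz by auto
      have sub: "?S \<subseteq> (Inl ` T :: ('a + 'a set \<times> nat) set)"
      proof
        fix y assume y: "y \<in> ?S"
        show "y \<in> Inl ` T"
        proof (cases y)
          case (Inl w)
          have w: "w \<in> V" using y Inl by simp
          have c: "(w \<in> T \<and> blk w \<noteq> T) \<or> (w \<notin> T \<and> blk w = T)"
            using y Inl vz sc[of y v] vW by (auto simp: key_def)
          then show ?thesis using blk[OF w] Inl by auto
        next
          case (Inr z')
          then obtain T' j where yz: "y = Inr (T',j)" by (cases z') auto
          have False using y yz vz sc[of y v] vW by (auto simp: key_def)
          then show ?thesis ..
        qed
      qed
      have "card ?S \<le> card (Inl ` T :: ('a + 'a set \<times> nat) set)"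
        using sub finite_subset[OF Ti(1) fin] by (intro card_mono) auto
      also have "\<dots> = 3" using Ti by (simp add: card_image)
      finally show "card ?S \<le> H_tol (card V) v" using vz by simp
    qed
  qed
  then show ?thesis unfolding has_tolerant_clustering_def using part by blast
qed

end

theorem corollary1:
  fixes V :: "'a set" and E :: "'a \<Rightarrow> 'a \<Rightarrow> bool"
  assumes "finite V"
    and "\<And>u v. E u v \<Longrightarrow> u \<in> V \<and> v \<in> V"
    and "\<And>u v. E u v \<Longrightarrow> E v u"
    and "\<And>u. \<not> E u u"
    and "\<And>v. v \<in> V \<Longrightarrow> card {u \<in> V. E v u} = 4"
    and "card V \<ge> 7"
  shows "has_tolerant_clustering (H_vertices V) (H_plus E) (H_tol (card V))
           \<longleftrightarrow> triangle_partition V E"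
proof -
  interpret cg V E using assms by unfold_locales
  show ?thesis
  proof
    assume "has_tolerant_clustering (H_vertices V) (H_plus E) (H_tol (card V))"
    then obtain C where "partition_on (H_vertices V) C"
      "\<forall>v\<in>H_vertices V. errors_at (H_vertices V) (H_plus E) C v \<le> H_tol (card V) v"
      unfolding has_tolerant_clustering_def by blast
    then interpret cgC V E C by unfold_locales
    show "triangle_partition V E" by (rule forward)
  next
    assume "triangle_partition V E"
    then show "has_tolerant_clustering (H_vertices V) (H_plus E) (H_tol (card V))" by (rule backward)
  qed
qed

end
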